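(* There exist $2^{\mathfrak{c}}$ pairwise non-homeomorphic topologies $\vartheta\in\mathcal{L}_0\setminus\{\eta\}$ such that no topology $\tau\in\mathcal{L}$ satisfies $\vartheta\subsetneq\tau\subsetneq\eta$.
   Context: $\mathfrak{c}=|\mathbb{R}|$. $\eta$ denotes the Euclidean topology on $\mathbb{R}$. $\mathcal{L}$ denotes the family of all Hausdorff topologies $\tau$ on $\mathbb{R}$ with $\tau\subset\eta$. For $\tau\in\mathcal{L}$ and $a\in\mathbb{R}$ let $\mathcal{N}_\tau(a)$ be the neighborhood filter of $a$; let $C(\tau)$ be the set of all $a$ with $\mathcal{N}_\tau(a)\neq\mathcal{N}_\eta(a)$. $\mathcal{L}_0:=\{\tau\in\mathcal{L}\mid C(\tau)\subset\{0\}\}$. *)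

theory Defs
  imports "HOL-Analysis.Analysis" "HOL-Library.Equipollence"
begin

text \<open>Topologies on the real line are values of type real topology with topspace UNIV.
  The Euclidean topology eta is euclideanreal. Coarser-than is inclusion of the families of open sets.\<close>

definition coarser :: "real topology \<Rightarrow> real topology \<Rightarrow> bool" where
  "coarser \<tau> \<sigma> \<longleftrightarrow> (\<forall>U. openin \<tau> U \<longrightarrow> openin \<sigma> U)"

definition LL :: "real topology set" where
  "LL = {\<tau>. topspace \<tau> = UNIV \<and> Hausdorff_space \<tau> \<and> coarser \<tau> euclideanreal}"

definition Cset :: "real topology \<Rightarrow> real set" where
  "Cset \<tau> = {a. nhdsin \<tau> a \<noteq> nhdsin euclideanreal a}"

definition LL0 :: "real topology set" where
  "LL0 = {\<tau> \<in> LL. Cset \<tau> \<subseteq> {0}}"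

end

theory Submission
  imports Defs "HOL-Library.Nat_Bijection"
begin

definition ofilt :: "real set set \<Rightarrow> bool" where
  "ofilt M \<longleftrightarrow> (\<forall>W\<in>M. open W \<and> W \<noteq> {}) \<and> (\<forall>W\<in>M. \<forall>V\<in>M. W \<inter> V \<in> M)"

definition maxof :: "real set set \<Rightarrow> bool" where
  "maxof M \<longleftrightarrow> ofilt M \<and> (\<forall>n::nat. {real n<..} \<in> M) \<and> (\<forall>M'. ofilt M' \<and> M \<subseteq> M' \<longrightarrow> M' = M)"

lemma maxof_dich:
  assumes "maxof M" "open V" "V \<notin> M" shows "\<exists>W\<in>M. W \<inter> V = {}"
proof (rule ccontr)
  assume H: "\<not> ?thesis"
  define M' where "M' = {U. open U \<and> (\<exists>W\<in>M. V \<inter> W \<subseteq> U)}"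
  have of: "ofilt M" and T: "\<And>n::nat. {real n<..} \<in> M" and mx: "\<And>M'. ofilt M' \<Longrightarrow> M \<subseteq> M' \<Longrightarrow> M' = M"
    using assms(1) unfolding maxof_def by auto
  have A1: "\<forall>W\<in>M'. open W \<and> W \<noteq> {}" using H by (auto simp: M'_def)
  have A2: "\<forall>W\<in>M'. \<forall>U\<in>M'. W \<inter> U \<in> M'"
  proof (intro ballI)
    fix W U assume "W \<in> M'" "U \<in> M'"
    then obtain A B where "A \<in> M" "B \<in> M" "V \<inter> A \<subseteq> W" "V \<inter> B \<subseteq> U" "open W" "open U"
      by (auto simp: M'_def)
    moreover have "A \<inter> B \<in> M" using of \<open>A \<in> M\<close> \<open>B \<in> M\<close> unfolding ofilt_def by auto
    ultimately show "W \<inter> U \<in> M'" unfolding M'_def by (intro CollectI conjI open_Int bexI[of _ "A \<inter> B"]) auto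
  qed
  have "ofilt M'" using A1 A2 unfolding ofilt_def by blast
  moreover have "M \<subseteq> M'" using of unfolding M'_def ofilt_def by auto
  ultimately have "M' = M" using mx by blast
  moreover have "V \<in> M'" unfolding M'_def using assms(2) T[of 0] by blast
  ultimately show False using assms(3) by simp
qed

definition thetop :: "real set set \<Rightarrow> real topology" where
  "thetop M = topology (\<lambda>U. open U \<and> (0 \<in> U \<longrightarrow> (\<exists>e>0. \<exists>W\<in>M. ball 0 e \<union> W \<subseteq> U)))"

lemma openin_thetop:
  assumes "ofilt M"
  shows "openin (thetop M) U \<longleftrightarrow> open U \<and> (0 \<in> U \<longrightarrow> (\<exists>e>0. \<exists>W\<in>M. ball 0 e \<union> W \<subseteq> U))"
proof -
  define L where "L = (\<lambda>U::real set. open U \<and> (0 \<in> U \<longrightarrow> (\<exists>e>0. \<exists>W\<in>M. ball 0 e \<union> W \<subseteq> U)))"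
  have "istopology L"
    unfolding istopology_def L_def
  proof (rule conjI; intro allI impI)
    fix S T :: "real set"
    assume SS: "open S \<and> (0 \<in> S \<longrightarrow> (\<exists>e>0. \<exists>W\<in>M. ball 0 e \<union> W \<subseteq> S))"
      and TT: "open T \<and> (0 \<in> T \<longrightarrow> (\<exists>e>0. \<exists>W\<in>M. ball 0 e \<union> W \<subseteq> T))"
    have X: "0 \<in> S \<inter> T \<Longrightarrow> \<exists>e>0. \<exists>W\<in>M. ball 0 e \<union> W \<subseteq> S \<inter> T"
    proof -
      assume "0 \<in> S \<inter> T"
      then obtain e1 W1 e2 W2 where "e1 > 0" "W1 \<in> M" "ball 0 e1 \<union> W1 \<subseteq> S"
        "e2 > 0" "W2 \<in> M" "ball 0 e2 \<union> W2 \<subseteq> T" using SS TT by auto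
      moreover have "W1 \<inter> W2 \<in> M" using assms \<open>W1 \<in> M\<close> \<open>W2 \<in> M\<close> unfolding ofilt_def by auto
      moreover have "ball 0 (min e1 e2) \<subseteq> ball 0 e1" "ball 0 (min e1 e2) \<subseteq> ball (0::real) e2"
        by (auto intro: subset_ball)
      moreover have "min e1 e2 > 0" using \<open>e1 > 0\<close> \<open>e2 > 0\<close> by simp
      ultimately show "\<exists>e>0. \<exists>W\<in>M. ball 0 e \<union> W \<subseteq> S \<inter> T"
        by blast
    qed
    have "open (S \<inter> T)" using SS TT by (intro open_Int) auto
    then show "open (S \<inter> T) \<and> (0 \<in> S \<inter> T \<longrightarrow> (\<exists>e>0. \<exists>W\<in>M. ball 0 e \<union> W \<subseteq> S \<inter> T))"
      using X by simp
  next
    fix K :: "real set set"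
    assume K: "\<forall>U\<in>K. open U \<and> (0 \<in> U \<longrightarrow> (\<exists>e>0. \<exists>W\<in>M. ball 0 e \<union> W \<subseteq> U))"
    have X: "0 \<in> \<Union>K \<Longrightarrow> \<exists>e>0. \<exists>W\<in>M. ball 0 e \<union> W \<subseteq> \<Union>K"
    proof -
      assume "0 \<in> \<Union>K"
      then obtain U where "U \<in> K" "0 \<in> U" by auto
      then obtain e W where "e > 0" "W \<in> M" "ball 0 e \<union> W \<subseteq> U" using K by meson
      then show "\<exists>e>0. \<exists>W\<in>M. ball 0 e \<union> W \<subseteq> \<Union>K" using \<open>U \<in> K\<close> by blast
    qed
    have "open (\<Union>K)" using K by (intro open_Union) auto
    then show "open (\<Union>K) \<and> (0 \<in> \<Union>K \<longrightarrow> (\<exists>e>0. \<exists>W\<in>M. ball 0 e \<union> W \<subseteq> \<Union>K))"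
      using X by simp
  qed
  then have "openin (topology L) = L" by (rule topology_inverse')
  then have "openin (thetop M) U = L U" unfolding thetop_def L_def[symmetric] by simp
  then show ?thesis by (simp add: L_def)
qed

lemma maxofD: assumes "maxof M"
  shows "ofilt M" "\<And>n::nat. {real n<..} \<in> M" "\<And>W V. W \<in> M \<Longrightarrow> V \<in> M \<Longrightarrow> W \<inter> V \<in> M"
    "\<And>W. W \<in> M \<Longrightarrow> open W" "\<And>W. W \<in> M \<Longrightarrow> W \<noteq> {}"
  using assms unfolding maxof_def ofilt_def by auto

lemma thetop_open_nozero: assumes "ofilt M" "open U" "0 \<notin> U" shows "openin (thetop M) U"
  using assms by (simp add: openin_thetop)

lemma thetop_open: assumes "ofilt M" "openin (thetop M) U" shows "open U"
  using assms by (simp add: openin_thetop)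

lemma thetop_ball_tail: assumes "maxof M" "e > 0"
  shows "openin (thetop M) (ball 0 e \<union> {real n<..})"
proof -
  have "open (ball 0 e \<union> {real n<..})" by (intro open_Un) auto
  then show ?thesis using maxofD[OF assms(1)] assms(2)
    by (subst openin_thetop) (auto intro!: exI[of _ e] bexI[of _ "{real n<..}"])
qed

lemma thetop_topspace: assumes "maxof M" shows "topspace (thetop M) = UNIV"
proof -
  have "openin (thetop M) (ball 0 1 \<union> {real 0<..})" by (rule thetop_ball_tail[OF assms]) simp
  moreover have "openin (thetop M) (UNIV - {0})"
    using maxofD(1)[OF assms] by (intro thetop_open_nozero) auto
  ultimately have "ball 0 1 \<union> {real 0<..} \<subseteq> topspace (thetop M)" "UNIV - {0} \<subseteq> topspace (thetop M)"
    by (auto dest: openin_subset)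
  moreover have "(0::real) \<in> ball 0 1" by simp
  ultimately show ?thesis by blast
qed

lemma coarser_thetop: assumes "maxof M" shows "coarser (thetop M) euclideanreal"
  unfolding coarser_def using thetop_open[OF maxofD(1)[OF assms]] by (metis open_openin)

lemma nhdsin_eq_lemma:
  assumes "topspace X = UNIV" "topspace Y = UNIV" "\<And>S. openin X S \<Longrightarrow> openin Y S"
    "\<And>S. openin Y S \<Longrightarrow> a \<in> S \<Longrightarrow> \<exists>T. openin X T \<and> a \<in> T \<and> T \<subseteq> S"
  shows "nhdsin X a = nhdsin Y a"
proof (rule filter_eqI)
  fix P
  show "eventually P (nhdsin X a) \<longleftrightarrow> eventually P (nhdsin Y a)"
  proof
    assume "eventually P (nhdsin X a)"
    then obtain S where "openin X S" "a \<in> S" "\<forall>x\<in>S. P x" unfolding eventually_nhdsin using assms(1) by auto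
    then show "eventually P (nhdsin Y a)" unfolding eventually_nhdsin using assms(3) by blast
  next
    assume "eventually P (nhdsin Y a)"
    then obtain S where "openin Y S" "a \<in> S" "\<forall>x\<in>S. P x" unfolding eventually_nhdsin using assms(2) by auto
    then obtain T where "openin X T" "a \<in> T" "T \<subseteq> S" using assms(4) by blast
    then show "eventually P (nhdsin X a)" unfolding eventually_nhdsin using \<open>\<forall>x\<in>S. P x\<close> by blast
  qed
qed

lemma thetop_nhds: assumes "maxof M" "a \<noteq> 0" shows "nhdsin (thetop M) a = nhdsin euclideanreal a"
proof (rule nhdsin_eq_lemma)
  show "topspace (thetop M) = UNIV" by (rule thetop_topspace[OF assms(1)])
  show "topspace euclideanreal = UNIV" by simp
  show "openin euclideanreal S" if "openin (thetop M) S" for S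
    using thetop_open[OF maxofD(1)[OF assms(1)] that] by (metis open_openin)
  show "\<exists>T. openin (thetop M) T \<and> a \<in> T \<and> T \<subseteq> S" if "openin euclideanreal S" "a \<in> S" for S
  proof (intro exI conjI)
    show "openin (thetop M) (S - {0})" using that maxofD(1)[OF assms(1)]
      by (intro thetop_open_nozero) (use open_openin in blast)+
  qed (use that assms(2) in auto)
qed

lemma thetop_LL0: assumes "maxof M" shows "thetop M \<in> LL0"
proof -
  have H: "\<exists>U V. openin (thetop M) U \<and> openin (thetop M) V \<and> 0 \<in> U \<and> y \<in> V \<and> disjnt U V"
    if "y \<noteq> 0" for y :: real
  proof -
    obtain n :: nat where n: "2 * \<bar>y\<bar> < real n" using reals_Archimedean2 by blast
    have "\<bar>y\<bar> > 0" using that by simp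
    define U where "U = ball 0 (\<bar>y\<bar>/2) \<union> {real n<..}"
    define V where "V = ball y (\<bar>y\<bar>/2)"
    have "openin (thetop M) U" unfolding U_def by (rule thetop_ball_tail[OF assms]) (use \<open>\<bar>y\<bar> > 0\<close> in simp)
    moreover have "openin (thetop M) V" unfolding V_def using maxofD(1)[OF assms]
      by (intro thetop_open_nozero) (auto simp: dist_real_def)
    moreover have "disjnt U V" unfolding disjnt_def U_def V_def
      using n by (auto simp: dist_real_def abs_if split: if_splits)
    moreover have "0 \<in> U" "y \<in> V" unfolding U_def V_def using \<open>\<bar>y\<bar> > 0\<close> by auto
    ultimately show ?thesis by blast
  qed
  have "Hausdorff_space (thetop M)"
    unfolding Hausdorff_space_def
  proof (intro allI impI)
    fix x y :: real assume "x \<in> topspace (thetop M) \<and> y \<in> topspace (thetop M) \<and> x \<noteq> y"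
    then have "x \<noteq> y" by simp
    show "\<exists>U V. openin (thetop M) U \<and> openin (thetop M) V \<and> x \<in> U \<and> y \<in> V \<and> disjnt U V"
    proof (cases "x = 0")
      case True
      then have "y \<noteq> 0" using \<open>x \<noteq> y\<close> by simp
      from H[OF this] show ?thesis using True by simp
    next
      case False
      show ?thesis
      proof (cases "y = 0")
        case True
        obtain U V where "openin (thetop M) U" "openin (thetop M) V" "0 \<in> U" "x \<in> V" "disjnt U V"
          using H[OF False] by blast
        moreover have "disjnt V U" using \<open>disjnt U V\<close> by (simp add: disjnt_sym)
        ultimately show ?thesis using True by blast
      next
        case False2: False
        obtain U V where "open U" "open V" "x \<in> U" "y \<in> V" "U \<inter> V = {}"
          using separation_t2[of x y] \<open>x \<noteq> y\<close> by blast
        have of: "ofilt M" by (rule maxofD(1)[OF assms])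
        have "openin (thetop M) (U - {0})"
          by (rule thetop_open_nozero[OF of open_Diff[OF \<open>open U\<close> closed_singleton]]) simp
        moreover have "openin (thetop M) (V - {0})"
          by (rule thetop_open_nozero[OF of open_Diff[OF \<open>open V\<close> closed_singleton]]) simp
        moreover have "x \<in> U - {0}" "y \<in> V - {0}" using False False2 \<open>x \<in> U\<close> \<open>y \<in> V\<close> by auto
        moreover have "disjnt (U - {0}) (V - {0})" using \<open>U \<inter> V = {}\<close> by (auto simp: disjnt_def)
        ultimately show ?thesis by blast
      qed
    qed
  qed
  moreover have "Cset (thetop M) \<subseteq> {0}" unfolding Cset_def using thetop_nhds[OF assms] by auto
  ultimately show ?thesis unfolding LL0_def LL_def
    using thetop_topspace[OF assms] coarser_thetop[OF assms] by auto
qed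

lemma thetop_ne: assumes "maxof M" shows "thetop M \<noteq> euclideanreal"
proof
  assume E: "thetop M = euclideanreal"
  have "openin euclideanreal (ball (0::real) 1)" by (metis open_ball open_openin)
  then have "openin (thetop M) (ball 0 1)" using E by simp
  then obtain e W where "W \<in> M" "ball 0 e \<union> W \<subseteq> ball 0 1"
    using maxofD(1)[OF assms] by (auto simp: openin_thetop)
  moreover have "W \<inter> {real 1<..} \<in> M" using maxofD[OF assms] \<open>W \<in> M\<close> by blast
  then obtain z where "z \<in> W" "z > 1" using maxofD(5)[OF assms] by fastforce
  ultimately show False by (auto simp: dist_real_def)
qed

lemma thetop_cover:
  assumes "maxof M" "coarser (thetop M) \<tau>" "thetop M \<noteq> \<tau>" "coarser \<tau> euclideanreal"
  shows "\<tau> = euclideanreal"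
proof -
  have of: "ofilt M" using maxofD(1)[OF assms(1)] .
  obtain U0 where "openin (thetop M) U0 \<noteq> openin \<tau> U0"
    using assms(3) topology_eq by metis
  then have U: "openin \<tau> U0" "\<not> openin (thetop M) U0"
    using assms(2) unfolding coarser_def by blast+
  define U where "U = U0"
  note U = U[folded U_def]
  have oU: "open U" using U(1) assms(4) unfolding coarser_def by (metis open_openin)
  have "0 \<in> U" using U(2) oU thetop_open_nozero[OF of] by blast
  obtain e where "e > 0" "ball 0 e \<subseteq> U" using oU \<open>0 \<in> U\<close> open_contains_ball by blast
  have "U \<notin> M"
  proof
    assume "U \<in> M"
    then have "openin (thetop M) U" using oU of \<open>e > 0\<close> \<open>ball 0 e \<subseteq> U\<close>
      by (subst openin_thetop) auto
    then show False using U(2) by simp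
  qed
  from maxof_dich[OF assms(1) oU this] obtain W where W: "W \<in> M" "W \<inter> U = {}" by blast
  have "openin \<tau> S" if "open S" for S
  proof (cases "0 \<in> S")
    case False
    have "openin (thetop M) S" by (rule thetop_open_nozero[OF of that False])
    then show ?thesis using assms(2) unfolding coarser_def by blast
  next
    case True
    from that True obtain d where "d > 0" "ball 0 d \<subseteq> S" by (auto simp: open_contains_ball)
    define G where "G = ball 0 d \<union> W"
    have "openin (thetop M) G" unfolding G_def using of W(1) \<open>d > 0\<close>
      by (subst openin_thetop) (auto simp: ofilt_def)
    then have "openin \<tau> G" using assms(2) unfolding coarser_def by blast
    then have "openin \<tau> (G \<inter> U)" using U(1) by blast
    moreover have "openin \<tau> (S - {0})" using assms(2) thetop_open_nozero[OF of] that
      unfolding coarser_def by blast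
    ultimately have "openin \<tau> ((G \<inter> U) \<union> (S - {0}))" by blast
    moreover have "(G \<inter> U) \<union> (S - {0}) = S"
    proof -
      have "G \<inter> U \<subseteq> ball 0 d" using W(2) unfolding G_def by blast
      moreover have "(0::real) \<in> G" using \<open>d > 0\<close> unfolding G_def by simp
      ultimately show ?thesis using \<open>ball 0 d \<subseteq> S\<close> True \<open>0 \<in> U\<close> by blast
    qed
    ultimately show ?thesis by simp
  qed
  then have "\<forall>S. openin \<tau> S \<longleftrightarrow> openin euclideanreal S"
    using assms(4) unfolding coarser_def by (metis open_openin)
  then show ?thesis unfolding topology_eq by blast
qed

definition atom :: "nat \<Rightarrow> real set" where "atom n = {real n<..<real n + 1}"
definition AX :: "nat set \<Rightarrow> nat set" where
  "AX X = {prod_encode (k, j) | k j. set_encode (X \<inter> {..<k}) \<in> set_decode j}"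
definition OX :: "(nat set \<Rightarrow> bool) \<Rightarrow> nat set \<Rightarrow> real set" where
  "OX f X = \<Union> {atom n | n. (n \<in> AX X) = f X}"
definition base :: "(nat set \<Rightarrow> bool) \<Rightarrow> real set set" where
  "base f = {U. open U \<and> (\<exists>n::nat. \<exists>K. finite K \<and> {real n<..} \<inter> \<Inter> (OX f ` K) \<subseteq> U)}"

lemma atom_disj: assumes "x \<in> atom n" "x \<in> atom m" shows "n = m"
proof -
  have "real n < real m + 1" "real m < real n + 1" using assms by (auto simp: atom_def)
  then have "real n < real (m + 1)" "real m < real (n + 1)" by auto
  then have "n < m + 1" "m < n + 1" by (simp_all only: of_nat_less_iff)
  then show ?thesis by simp
qed

lemma OX_disj: assumes "f X \<noteq> g X" shows "OX f X \<inter> OX g X = {}"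
proof (rule ccontr)
  assume "OX f X \<inter> OX g X \<noteq> {}"
  then obtain x where "x \<in> OX f X" "x \<in> OX g X" by blast
  then obtain n m where "x \<in> atom n" "(n \<in> AX X) = f X" "x \<in> atom m" "(m \<in> AX X) = g X"
    unfolding OX_def by blast
  moreover have "n = m" using atom_disj calculation by blast
  ultimately show False using assms by simp
qed

lemma open_OX: "open (OX f X)"
  unfolding OX_def atom_def by (intro open_Union) auto

lemma prefix_sep:
  fixes K :: "nat set set"
  assumes "finite K"
  shows "\<exists>k0. \<forall>k\<ge>k0. \<forall>X\<in>K. \<forall>Y\<in>K. X \<inter> {..<k} = Y \<inter> {..<k} \<longrightarrow> X = Y"
proof -
  have "\<forall>p\<in>K \<times> K. eventually (\<lambda>k. fst p \<inter> {..<k} = snd p \<inter> {..<k} \<longrightarrow> fst p = snd p) sequentially"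
  proof
    fix p assume "p \<in> K \<times> K"
    obtain X Y where p: "p = (X, Y)" by (cases p)
    show "eventually (\<lambda>k. fst p \<inter> {..<k} = snd p \<inter> {..<k} \<longrightarrow> fst p = snd p) sequentially"
    proof (cases "X = Y")
      case True then show ?thesis using p by simp
    next
      case False
      then obtain i where i: "i \<in> X \<and> i \<notin> Y \<or> i \<in> Y \<and> i \<notin> X" by blast
      have "fst p \<inter> {..<k} \<noteq> snd p \<inter> {..<k}" if "k \<ge> Suc i" for k
      proof
        assume "fst p \<inter> {..<k} = snd p \<inter> {..<k}"
        then have "X \<inter> {..<k} = Y \<inter> {..<k}" using p by simp
        moreover have "i < k" using that by simp
        ultimately show False using i by blast
      qed
      then show ?thesis unfolding eventually_sequentially by blast
    qed
  qed
  then have "eventually (\<lambda>k. \<forall>p\<in>K \<times> K. fst p \<inter> {..<k} = snd p \<inter> {..<k} \<longrightarrow> fst p = snd p) sequentially"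
    using assms by (simp add: eventually_ball_finite_distrib)
  then obtain k0 where "\<forall>k\<ge>k0. \<forall>p\<in>K \<times> K. fst p \<inter> {..<k} = snd p \<inter> {..<k} \<longrightarrow> fst p = snd p"
    unfolding eventually_sequentially by blast
  then have k0: "\<And>k X Y. k \<ge> k0 \<Longrightarrow> (X, Y) \<in> K \<times> K \<Longrightarrow> X \<inter> {..<k} = Y \<inter> {..<k} \<Longrightarrow> X = Y"
    by (metis fst_conv snd_conv)
  show ?thesis
  proof (intro exI allI impI ballI)
    fix k X Y assume "k \<ge> k0" "X \<in> K" "Y \<in> K" "X \<inter> {..<k} = Y \<inter> {..<k}"
    then show "X = Y" using k0[of k X Y] by blast
  qed
qed

lemma indep:
  assumes "finite K"
  shows "\<exists>x. x > real n \<and> (\<forall>X\<in>K. x \<in> OX f X)"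
proof -
  obtain k0 where k0: "\<forall>k\<ge>k0. \<forall>X\<in>K. \<forall>Y\<in>K. X \<inter> {..<k} = Y \<inter> {..<k} \<longrightarrow> X = Y"
    using prefix_sep[OF assms] by blast
  define k where "k = max k0 n"
  have kk: "\<forall>X\<in>K. \<forall>Y\<in>K. X \<inter> {..<k} = Y \<inter> {..<k} \<longrightarrow> X = Y"
  proof -
    have "k0 \<le> k" by (simp add: k_def)
    then show ?thesis using mp[OF spec[OF k0, of k]] by blast
  qed
  define S where "S = (\<lambda>X. set_encode (X \<inter> {..<k})) ` {X\<in>K. f X}"
  have fS: "finite S" unfolding S_def using assms by simp
  define j where "j = set_encode S"
  define m where "m = prod_encode (k, j)"
  define x where "x = real m + 1/2"
  have "n \<le> k" unfolding k_def by simp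
  also have "k \<le> m" unfolding m_def by (rule le_prod_encode_1)
  finally have "real n < x" unfolding x_def by simp
  moreover have "x \<in> OX f X" if "X \<in> K" for X
  proof -
    have "(m \<in> AX X) = (set_encode (X \<inter> {..<k}) \<in> S)"
      unfolding AX_def m_def j_def using fS by auto
    also have "\<dots> = f X"
    proof
      assume "set_encode (X \<inter> {..<k}) \<in> S"
      then obtain Y where Y: "Y \<in> K" "f Y" "set_encode (Y \<inter> {..<k}) = set_encode (X \<inter> {..<k})"
        unfolding S_def by auto
      then have "Y \<inter> {..<k} = X \<inter> {..<k}" by (subst (asm) set_encode_eq) auto
      then have "Y = X" using kk Y(1) that by blast
      then show "f X" using Y by simp
    next
      assume "f X" then show "set_encode (X \<inter> {..<k}) \<in> S" unfolding S_def using that by blast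
    qed
    finally have "(m \<in> AX X) = f X" .
    moreover have "x \<in> atom m" unfolding x_def atom_def by simp
    ultimately show ?thesis unfolding OX_def by blast
  qed
  ultimately show ?thesis by blast
qed

lemma ofilt_base: "ofilt (base f)"
  unfolding ofilt_def
proof (rule conjI; intro ballI)
  fix W assume "W \<in> base f"
  then obtain n K where "open W" "finite K" "{real n<..} \<inter> \<Inter> (OX f ` K) \<subseteq> W"
    unfolding base_def by blast
  moreover obtain x where "x > real n" "\<forall>X\<in>K. x \<in> OX f X" using indep[OF \<open>finite K\<close>] by blast
  ultimately show "open W \<and> W \<noteq> {}" by blast
next
  fix W V assume "W \<in> base f" "V \<in> base f"
  then obtain n K n2 K2 where "open W" "finite K" "{real n<..} \<inter> \<Inter> (OX f ` K) \<subseteq> W"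
     "open V" "finite K2" "{real n2<..} \<inter> \<Inter> (OX f ` K2) \<subseteq> V"
    unfolding base_def by blast
  moreover have "{real (max n n2)<..} \<inter> \<Inter> (OX f ` (K \<union> K2)) \<subseteq> {real n<..} \<inter> \<Inter> (OX f ` K)"
    "{real (max n n2)<..} \<inter> \<Inter> (OX f ` (K \<union> K2)) \<subseteq> {real n2<..} \<inter> \<Inter> (OX f ` K2)"
    by auto
  ultimately show "W \<inter> V \<in> base f" unfolding base_def
    by (intro CollectI conjI open_Int exI[of _ "max n n2"] exI[of _ "K \<union> K2"]) blast+
qed

lemma base_tail: "{real n<..} \<in> base f"
  unfolding base_def by (intro CollectI conjI exI[of _ n] exI[of _ "{}"]) auto

lemma base_OX: "OX f X \<in> base f"
  unfolding base_def using open_OX by (intro CollectI conjI exI[of _ 0] exI[of _ "{X}"]) auto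

lemma exists_maxof: "\<exists>M. maxof M \<and> base f \<subseteq> M"
proof -
  define A where "A = {M. ofilt M \<and> base f \<subseteq> M}"
  have "A \<noteq> {}" unfolding A_def using ofilt_base by blast
  moreover have "\<Union>C \<in> A" if "C \<noteq> {}" "subset.chain A C" for C
  proof -
    have CA: "C \<subseteq> A" and ch: "\<And>M1 M2. M1 \<in> C \<Longrightarrow> M2 \<in> C \<Longrightarrow> M1 \<subseteq> M2 \<or> M2 \<subseteq> M1"
      using that(2) unfolding subset.chain_def by auto
    have "ofilt (\<Union>C)" unfolding ofilt_def
    proof (rule conjI; intro ballI)
      fix W assume "W \<in> \<Union>C"
      then obtain M where "M \<in> C" "W \<in> M" by blast
      then show "open W \<and> W \<noteq> {}" using CA unfolding A_def ofilt_def by blast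
    next
      fix W V assume "W \<in> \<Union>C" "V \<in> \<Union>C"
      then obtain M1 M2 where "M1 \<in> C" "W \<in> M1" "M2 \<in> C" "V \<in> M2" by blast
      then have "(W \<in> M2 \<and> M2 \<in> C) \<or> (V \<in> M1 \<and> M1 \<in> C)" using ch by blast
      then show "W \<inter> V \<in> \<Union>C"
      proof
        assume "W \<in> M2 \<and> M2 \<in> C"
        then have "W \<inter> V \<in> M2" using CA \<open>V \<in> M2\<close> unfolding A_def ofilt_def by blast
        then show ?thesis using \<open>W \<in> M2 \<and> M2 \<in> C\<close> by blast
      next
        assume "V \<in> M1 \<and> M1 \<in> C"
        then have "W \<inter> V \<in> M1" using CA \<open>W \<in> M1\<close> unfolding A_def ofilt_def by blast
        then show ?thesis using \<open>V \<in> M1 \<and> M1 \<in> C\<close> by blast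
      qed
    qed
    moreover have "base f \<subseteq> \<Union>C" using that(1) CA unfolding A_def by blast
    ultimately show ?thesis unfolding A_def by blast
  qed
  ultimately obtain M where M: "M \<in> A" "\<forall>X\<in>A. M \<subseteq> X \<longrightarrow> X = M"
    using subset_Zorn_nonempty[of A] by blast
  have "maxof M" unfolding maxof_def
  proof (intro conjI allI impI)
    show "ofilt M" using M(1) unfolding A_def by blast
    show "{real n<..} \<in> M" for n using M(1) base_tail unfolding A_def by blast
    show "M' = M" if "ofilt M' \<and> M \<subseteq> M'" for M'
      using M that unfolding A_def by blast
  qed
  then show ?thesis using M(1) unfolding A_def by blast
qed

definition mf :: "(nat set \<Rightarrow> bool) \<Rightarrow> real set set" where
  "mf f = (SOME M. maxof M \<and> base f \<subseteq> M)"

lemma mf: "maxof (mf f)" "base f \<subseteq> mf f"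
  using someI_ex[OF exists_maxof[of f]] unfolding mf_def by blast+

lemma thetop_distinct:
  assumes "maxof M1" "maxof M2" "V \<in> M1" "W \<in> M2" "V \<inter> W = {}"
  shows "thetop M1 \<noteq> thetop M2"
proof
  assume E: "thetop M1 = thetop M2"
  define U where "U = ball 0 1 \<union> (V \<inter> {real 2<..})"
  have V2: "V \<inter> {real 2<..} \<in> M1" using maxofD[OF assms(1)] assms(3) by blast
  have oU: "open U" unfolding U_def using maxofD(4)[OF assms(1) V2] by (intro open_Un) auto
  have "openin (thetop M1) U" using maxofD(1)[OF assms(1)] oU V2
    by (subst openin_thetop) (auto simp: U_def intro!: exI[of _ 1])
  then have "openin (thetop M2) U" using E by simp
  moreover have "(0::real) \<in> U" unfolding U_def by simp
  ultimately obtain e W' where W': "W' \<in> M2" "ball 0 e \<union> W' \<subseteq> U"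
    using maxofD(1)[OF assms(2)] by (auto simp: openin_thetop)
  have "W' \<inter> W \<in> M2" using maxofD(3)[OF assms(2) W'(1) assms(4)] .
  then have "W' \<inter> W \<inter> {real 2<..} \<in> M2" using maxofD(2,3)[OF assms(2)] by blast
  then obtain z where z: "z \<in> W'" "z \<in> W" "z > 2" using maxofD(5)[OF assms(2)] by fastforce
  then have "z \<in> U" using W'(2) by blast
  moreover have "z \<notin> ball 0 1" using z(3) by (simp add: dist_real_def)
  ultimately have "z \<in> V" unfolding U_def by blast
  then show False using z(2) assms(5) by blast
qed

definition gg :: "nat set \<Rightarrow> real" where
  "gg = (SOME g. bij_betw g (UNIV::nat set set) (UNIV::real set))"

lemma gg_bij: "bij_betw gg UNIV UNIV"
  unfolding gg_def using nat_sets_eqpoll_reals unfolding eqpoll_def by (rule someI_ex)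

definition fY :: "real set \<Rightarrow> nat set \<Rightarrow> bool" where "fY Y = (\<lambda>X. gg X \<in> Y)"

definition TT :: "real set \<Rightarrow> real topology" where "TT Y = thetop (mf (fY Y))"

lemma TT_inj: "inj TT"
proof (rule injI)
  fix Y1 Y2 assume E: "TT Y1 = TT Y2"
  show "Y1 = Y2"
  proof (rule ccontr)
    assume "Y1 \<noteq> Y2"
    then obtain r where r: "r \<in> Y1 \<longleftrightarrow> r \<notin> Y2" by blast
    obtain X where "gg X = r" using gg_bij unfolding bij_betw_def by (metis UNIV_I imageE)
    then have "fY Y1 X \<noteq> fY Y2 X" using r unfolding fY_def by simp
    then have D: "OX (fY Y1) X \<inter> OX (fY Y2) X = {}" by (rule OX_disj)
    have "OX (fY Y1) X \<in> mf (fY Y1)" "OX (fY Y2) X \<in> mf (fY Y2)"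
      using mf(2) base_OX by blast+
    then have "thetop (mf (fY Y1)) \<noteq> thetop (mf (fY Y2))"
      using thetop_distinct[OF mf(1) mf(1)] D by blast
    then show False using E unfolding TT_def by simp
  qed
qed

lemma TT_props: "TT Y \<in> LL0" "TT Y \<noteq> euclideanreal"
  "\<not> (\<exists>\<tau>\<in>LL. coarser (TT Y) \<tau> \<and> TT Y \<noteq> \<tau> \<and> coarser \<tau> euclideanreal \<and> \<tau> \<noteq> euclideanreal)"
  unfolding TT_def using thetop_LL0[OF mf(1)] thetop_ne[OF mf(1)] thetop_cover[OF mf(1)] by blast+

lemma LL0_D: assumes "\<theta> \<in> LL0"
  shows "topspace \<theta> = UNIV" "\<And>U. openin \<theta> U \<Longrightarrow> open U" "\<And>a. a \<noteq> 0 \<Longrightarrow> nhdsin \<theta> a = nhdsin euclideanreal a"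
proof -
  have L: "\<theta> \<in> LL" using assms unfolding LL0_def by simp
  then show "topspace \<theta> = UNIV" unfolding LL_def by simp
  have "coarser \<theta> euclideanreal" using L unfolding LL_def by simp
  then show "open U" if "openin \<theta> U" for U
    using that unfolding coarser_def by simp
  show "nhdsin \<theta> a = nhdsin euclideanreal a" if "a \<noteq> 0" for a
  proof (rule ccontr)
    assume "nhdsin \<theta> a \<noteq> nhdsin euclideanreal a"
    then have "a \<in> Cset \<theta>" unfolding Cset_def by simp
    moreover have "Cset \<theta> \<subseteq> {0}" using assms unfolding LL0_def by simp
    ultimately show False using that by blast
  qed
qed

lemma hcont:
  assumes "\<rho> \<in> LL0" "\<theta> \<in> LL0" "homeomorphic_map \<rho> \<theta> h" "h x \<noteq> 0" "e > 0"
  shows "\<exists>d>0. \<forall>y. \<bar>y - x\<bar> < d \<longrightarrow> \<bar>h y - h x\<bar> < e"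
proof -
  have "eventually (\<lambda>z. z \<in> ball (h x) e) (nhdsin euclideanreal (h x))"
    unfolding eventually_nhdsin by (metis open_ball open_openin centre_in_ball assms(5))
  then have "eventually (\<lambda>z. z \<in> ball (h x) e) (nhdsin \<theta> (h x))"
    using LL0_D(3)[OF assms(2,4)] by simp
  then obtain T where T: "openin \<theta> T" "h x \<in> T" "T \<subseteq> ball (h x) e"
    unfolding eventually_nhdsin using LL0_D(1)[OF assms(2)] by blast
  have "continuous_map \<rho> \<theta> h" using assms(3) by (rule homeomorphic_imp_continuous_map)
  then have "openin \<rho> {y \<in> topspace \<rho>. h y \<in> T}" using T(1) by (rule openin_continuous_map_preimage)
  then have "open {y. h y \<in> T}" using LL0_D(1,2)[OF assms(1)] by simp
  moreover have "x \<in> {y. h y \<in> T}" using T(2) by simp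
  ultimately obtain d where "d > 0" "ball x d \<subseteq> {y. h y \<in> T}" using open_contains_ball by blast
  then show ?thesis using T(3)
    by (intro exI[of _ d]) (auto simp: dist_real_def subset_iff abs_minus_commute)
qed

lemma hom_bij: assumes "\<rho> \<in> LL0" "\<theta> \<in> LL0" "homeomorphic_map \<rho> \<theta> h"
  shows "inj h" "surj h"
  using homeomorphic_imp_injective_map[OF assms(3)] homeomorphic_imp_surjective_map[OF assms(3)]
    LL0_D(1)[OF assms(1)] LL0_D(1)[OF assms(2)] by auto

lemma abs_contra: fixes a b c :: real
  assumes "\<bar>c - a\<bar> < \<bar>a - b\<bar> / 2" "\<bar>c - b\<bar> < \<bar>a - b\<bar> / 2" shows False
proof (cases "a \<le> b")
  case True
  then have "\<bar>a - b\<bar> = b - a" by simp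
  then have "c - a < \<bar>a - b\<bar> / 2" "- (c - a) < \<bar>a - b\<bar> / 2" "c - b < \<bar>a - b\<bar> / 2" "- (c - b) < \<bar>a - b\<bar> / 2"
    using assms unfolding abs_less_iff by auto
  then show False using \<open>\<bar>a - b\<bar> = _\<close> by argo
next
  case False
  then have "\<bar>a - b\<bar> = a - b" by simp
  then have "c - a < \<bar>a - b\<bar> / 2" "- (c - a) < \<bar>a - b\<bar> / 2" "c - b < \<bar>a - b\<bar> / 2" "- (c - b) < \<bar>a - b\<bar> / 2"
    using assms unfolding abs_less_iff by auto
  then show False using \<open>\<bar>a - b\<bar> = _\<close> by argo
qed

lemma hdet:
  assumes "\<rho> \<in> LL0" "\<theta>1 \<in> LL0" "\<theta>2 \<in> LL0" "homeomorphic_map \<rho> \<theta>1 h1" "homeomorphic_map \<rho> \<theta>2 h2"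
    "\<And>q. h1 (of_rat q) = h2 (of_rat q)" "h1 0 = h2 0" "inv h1 0 = inv h2 0"
  shows "h1 = h2"
proof
  fix x
  define b where "b = inv h1 0"
  have i1: "inj h1" "surj h1" using hom_bij[OF assms(1,2,4)] by auto
  have i2: "inj h2" "surj h2" using hom_bij[OF assms(1,3,5)] by auto
  have b1: "h1 b = 0" unfolding b_def using i1(2) by (simp add: surj_f_inv_f)
  have b2: "h2 b = 0" unfolding b_def assms(8) using i2(2) by (simp add: surj_f_inv_f)
  show "h1 x = h2 x"
  proof (cases "x = b")
    case True then show ?thesis using b1 b2 by simp
  next
    case False
    have n1: "h1 x \<noteq> 0" using False b1 i1(1) by (metis injD)
    have n2: "h2 x \<noteq> 0" using False b2 i2(1) by (metis injD)
    show ?thesis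
    proof (rule ccontr)
      assume ne: "h1 x \<noteq> h2 x"
      define e where "e = \<bar>h1 x - h2 x\<bar> / 2"
      have "e > 0" using ne unfolding e_def by simp
      obtain d1 where d1: "d1 > 0" "\<forall>y. \<bar>y - x\<bar> < d1 \<longrightarrow> \<bar>h1 y - h1 x\<bar> < e"
        using hcont[OF assms(1,2,4) n1 \<open>e > 0\<close>] by blast
      obtain d2 where d2: "d2 > 0" "\<forall>y. \<bar>y - x\<bar> < d2 \<longrightarrow> \<bar>h2 y - h2 x\<bar> < e"
        using hcont[OF assms(1,3,5) n2 \<open>e > 0\<close>] by blast
      have "x < x + min d1 d2" using d1(1) d2(1) by simp
      then obtain r where "r \<in> \<rat>" "x < r" "r < x + min d1 d2" using Rats_dense_in_real by blast
      then obtain q where q: "r = of_rat q" by (auto elim: Rats_cases)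
      have "\<bar>r - x\<bar> < d1" "\<bar>r - x\<bar> < d2" using \<open>x < r\<close> \<open>r < x + min d1 d2\<close> by auto
      then have "\<bar>h1 r - h1 x\<bar> < e" "\<bar>h2 r - h2 x\<bar> < e" using d1(2) d2(2) by blast+
      moreover have "h1 r = h2 r" using assms(6) q by simp
      ultimately show False unfolding e_def using abs_contra[of "h1 r" "h1 x" "h2 x"] by simp
    qed
  qed
qed

lemma hom_top: assumes "\<rho> \<in> LL0" "\<theta> \<in> LL0" "homeomorphic_map \<rho> \<theta> h"
  shows "openin \<theta> V \<longleftrightarrow> openin \<rho> (h -` V)"
proof -
  have "openin \<theta> (h ` (h -` V)) \<longleftrightarrow> openin \<rho> (h -` V)"
    by (rule homeomorphic_map_openness[OF assms(3)]) (simp add: LL0_D(1)[OF assms(1)])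
  moreover have "h ` (h -` V) = V" using hom_bij(2)[OF assms] by (simp add: surj_image_vimage_eq)
  ultimately show ?thesis by simp
qed

definition ee :: "real \<Rightarrow> nat set" where "ee = inv gg"

lemma ee_inj: "inj ee"
  unfolding ee_def using gg_bij by (simp add: bij_betw_def inj_on_inv_into)

definition hcode :: "(real \<Rightarrow> real) \<Rightarrow> nat set" where
  "hcode h = {to_nat (Inl (q, n) :: (rat \<times> nat) + (bool \<times> nat)) | q n. n \<in> ee (h (of_rat q))}
    \<union> {to_nat (Inr (False, n) :: (rat \<times> nat) + (bool \<times> nat)) | n. n \<in> ee (h 0)}
    \<union> {to_nat (Inr (True, n) :: (rat \<times> nat) + (bool \<times> nat)) | n. n \<in> ee (inv h 0)}"

lemma code_Inl: "to_nat (Inl (q, n) :: (rat \<times> nat) + (bool \<times> nat)) \<in> hcode h \<longleftrightarrow> n \<in> ee (h (of_rat q))"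
  unfolding hcode_def by auto

lemma code_F: "to_nat (Inr (False, n) :: (rat \<times> nat) + (bool \<times> nat)) \<in> hcode h \<longleftrightarrow> n \<in> ee (h 0)"
  unfolding hcode_def by auto

lemma code_T: "to_nat (Inr (True, n) :: (rat \<times> nat) + (bool \<times> nat)) \<in> hcode h \<longleftrightarrow> n \<in> ee (inv h 0)"
  unfolding hcode_def by auto

lemma code_eq:
  assumes "hcode h1 = hcode h2"
  shows "\<And>q. h1 (of_rat q) = h2 (of_rat q)" "h1 0 = h2 0" "inv h1 0 = inv h2 0"
proof -
  fix q
  have "ee (h1 (of_rat q)) = ee (h2 (of_rat q))" using assms code_Inl by blast
  then show "h1 (of_rat q) = h2 (of_rat q)" using ee_inj by (simp add: inj_eq)
next
  have "ee (h1 0) = ee (h2 0)" using assms code_F by blast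
  then show "h1 0 = h2 0" using ee_inj by (simp add: inj_eq)
next
  have "ee (inv h1 0) = ee (inv h2 0)" using assms code_T by blast
  then show "inv h1 0 = inv h2 0" using ee_inj by (simp add: inj_eq)
qed

lemma class_bound:
  assumes "\<rho> \<in> LL0"
  shows "\<exists>c::real topology \<Rightarrow> nat set. inj_on c {\<theta> \<in> LL0. \<rho> homeomorphic_space \<theta>}"
proof -
  define H where "H = (\<lambda>\<theta>::real topology. SOME h::real\<Rightarrow>real. homeomorphic_map \<rho> \<theta> h)"
  have H: "homeomorphic_map \<rho> \<theta> (H \<theta>)" if "\<rho> homeomorphic_space \<theta>" for \<theta>
    using that unfolding homeomorphic_space H_def by (rule someI_ex)
  have "inj_on (\<lambda>\<theta>. hcode (H \<theta>)) {\<theta> \<in> LL0. \<rho> homeomorphic_space \<theta>}"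
  proof (rule inj_onI)
    fix \<theta>1 \<theta>2 assume t1: "\<theta>1 \<in> {\<theta> \<in> LL0. \<rho> homeomorphic_space \<theta>}"
      and t2: "\<theta>2 \<in> {\<theta> \<in> LL0. \<rho> homeomorphic_space \<theta>}" and c: "hcode (H \<theta>1) = hcode (H \<theta>2)"
    have h1: "homeomorphic_map \<rho> \<theta>1 (H \<theta>1)" using t1 H by blast
    have h2: "homeomorphic_map \<rho> \<theta>2 (H \<theta>2)" using t2 H by blast
    have "H \<theta>1 = H \<theta>2"
      using hdet[OF assms _ _ h1 h2] t1 t2 code_eq[OF c] by blast
    then show "\<theta>1 = \<theta>2"
      unfolding topology_eq using hom_top[OF assms _ h1] hom_top[OF assms _ h2] t1 t2 by simp
  qed
  then show ?thesis by (intro exI[of _ "\<lambda>\<theta>. hcode (H \<theta>)"])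
qed


unbundle cardinal_syntax

lemma lep_card: "A \<lesssim> B \<longleftrightarrow> |A| \<le>o |B|"
  unfolding lepoll_def by (rule card_of_ordLeq)

lemma card_main:
  fixes X :: "'a set" and R :: "'b set" and Y :: "'c set"
  assumes XRY: "X \<lesssim> R \<times> Y" and infY: "infinite Y" and YX: "Y \<prec> X"
  shows "X \<lesssim> R"
proof -
  have YX': "Y \<lesssim> X" "\<not> Y \<approx> X" using YX unfolding lesspoll_def by auto
  have "|R| \<le>o |Y| \<or> |Y| \<le>o |R|" by (rule ordLeq_total[OF card_of_Well_order card_of_Well_order])
  then show ?thesis
  proof
    assume RY: "|R| \<le>o |Y|"
    show ?thesis
    proof (cases "R = {}")
      case True
      then have "X = {}" using XRY by simp
      then have "Y = {}" using YX'(1) by simp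
      then show ?thesis using infY by simp
    next
      case False
      have "|R \<times> Y| =o |Y|" using card_of_Times_infinite[OF infY False RY] by blast
      moreover have "|X| \<le>o |R \<times> Y|" using XRY lep_card by blast
      ultimately have "|X| \<le>o |Y|" using ordLeq_ordIso_trans by blast
      then have "X \<lesssim> Y" using lep_card by blast
      then have "Y \<approx> X" using YX'(1) lepoll_antisym by blast
      then show ?thesis using YX'(2) by blast
    qed
  next
    assume YR: "|Y| \<le>o |R|"
    have infR: "infinite R" using YR infY card_of_ordLeq_finite by blast
    have "Y \<noteq> {}" using infY by auto
    have "|R \<times> Y| =o |R|" using card_of_Times_infinite[OF infR \<open>Y \<noteq> {}\<close> YR] by blast
    moreover have "|X| \<le>o |R \<times> Y|" using XRY lep_card by blast
    ultimately have "|X| \<le>o |R|" using ordLeq_ordIso_trans by blast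
    then show ?thesis using lep_card by blast
  qed
qed

theorem proposition8:
  shows "\<exists>F :: real topology set.
    F \<subseteq> LL0 - {euclideanreal} \<and>
    F \<approx> (UNIV :: real set set) \<and>
    (\<forall>\<theta>1\<in>F. \<forall>\<theta>2\<in>F. \<theta>1 \<noteq> \<theta>2 \<longrightarrow> \<not> (\<theta>1 homeomorphic_space \<theta>2)) \<and>
    (\<forall>\<theta>\<in>F. \<not> (\<exists>\<tau>\<in>LL. coarser \<theta> \<tau> \<and> \<theta> \<noteq> \<tau> \<and> coarser \<tau> euclideanreal \<and> \<tau> \<noteq> euclideanreal))"
proof -
  define Th where "Th = range TT"
  define rep where "rep = (\<lambda>\<theta>::real topology. SOME \<theta>'. \<theta>' \<in> Th \<and> \<theta> homeomorphic_space \<theta>')"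
  define F where "F = rep ` Th"
  have ThL: "Th \<subseteq> LL0" unfolding Th_def using TT_props(1) by blast
  have rep1: "rep \<theta> \<in> Th \<and> \<theta> homeomorphic_space rep \<theta>" if "\<theta> \<in> Th" for \<theta>
    unfolding rep_def by (rule someI[of _ \<theta>]) (use that in simp)
  have rep2: "rep \<theta>1 = rep \<theta>2" if "\<theta>1 homeomorphic_space \<theta>2" for \<theta>1 \<theta>2
  proof -
    have "(\<lambda>\<theta>'. \<theta>' \<in> Th \<and> \<theta>1 homeomorphic_space \<theta>') = (\<lambda>\<theta>'. \<theta>' \<in> Th \<and> \<theta>2 homeomorphic_space \<theta>')"
      using that homeomorphic_space_sym homeomorphic_space_trans by blast
    then show ?thesis unfolding rep_def by simp
  qed
  have FTh: "F \<subseteq> Th" unfolding F_def using rep1 by blast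
  have P1: "F \<subseteq> LL0 - {euclideanreal}"
  proof
    fix \<theta> assume "\<theta> \<in> F"
    then obtain Y where "\<theta> = TT Y" using FTh unfolding Th_def by blast
    then show "\<theta> \<in> LL0 - {euclideanreal}" using TT_props(1,2)[of Y] by simp
  qed
  have P4: "\<forall>\<theta>\<in>F. \<not> (\<exists>\<tau>\<in>LL. coarser \<theta> \<tau> \<and> \<theta> \<noteq> \<tau> \<and> coarser \<tau> euclideanreal \<and> \<tau> \<noteq> euclideanreal)"
  proof
    fix \<theta> assume "\<theta> \<in> F"
    then obtain Y where "\<theta> = TT Y" using FTh unfolding Th_def by blast
    then show "\<not> (\<exists>\<tau>\<in>LL. coarser \<theta> \<tau> \<and> \<theta> \<noteq> \<tau> \<and> coarser \<tau> euclideanreal \<and> \<tau> \<noteq> euclideanreal)"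
      using TT_props(3)[of Y] by simp
  qed
  have P3: "\<forall>\<theta>1\<in>F. \<forall>\<theta>2\<in>F. \<theta>1 \<noteq> \<theta>2 \<longrightarrow> \<not> (\<theta>1 homeomorphic_space \<theta>2)"
  proof (intro ballI impI notI)
    fix \<theta>1 \<theta>2 assume "\<theta>1 \<in> F" "\<theta>2 \<in> F" "\<theta>1 \<noteq> \<theta>2" "\<theta>1 homeomorphic_space \<theta>2"
    then obtain a b where ab: "a \<in> Th" "b \<in> Th" "\<theta>1 = rep a" "\<theta>2 = rep b" unfolding F_def by blast
    have "a homeomorphic_space \<theta>1" using rep1[OF ab(1)] ab(3) by simp
    also have "\<theta>1 homeomorphic_space \<theta>2" by fact
    also have "\<theta>2 homeomorphic_space b" using rep1[OF ab(2)] ab(4) homeomorphic_space_sym by blast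
    finally have "rep a = rep b" by (rule rep2)
    then show False using ab \<open>\<theta>1 \<noteq> \<theta>2\<close> by simp
  qed
  have ThU: "Th \<approx> (UNIV :: real set set)" unfolding Th_def
    using inj_on_image_eqpoll_self[OF TT_inj] by blast
  have "F \<lesssim> (UNIV :: real set set)" using FTh ThU subset_imp_lepoll lepoll_trans2 by blast
  moreover have "(UNIV :: real set set) \<lesssim> F"
  proof -
    have "\<forall>\<rho>\<in>LL0. \<exists>c::real topology \<Rightarrow> nat set. inj_on c {\<theta> \<in> LL0. \<rho> homeomorphic_space \<theta>}"
      using class_bound by (intro ballI)
    from bchoice[OF this] obtain cl :: "real topology \<Rightarrow> real topology \<Rightarrow> nat set"
      where cl0: "\<forall>\<rho>\<in>LL0. inj_on (cl \<rho>) {\<theta> \<in> LL0. \<rho> homeomorphic_space \<theta>}" by (elim exE)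
    have cl: "inj_on (cl \<rho>) {\<theta> \<in> LL0. \<rho> homeomorphic_space \<theta>}" if "\<rho> \<in> LL0" for \<rho>
      using cl0 that by (rule bspec)
    have "inj_on (\<lambda>\<theta>. (rep \<theta>, cl (rep \<theta>) \<theta>)) Th"
    proof (rule inj_onI)
      fix \<theta>1 \<theta>2 assume t: "\<theta>1 \<in> Th" "\<theta>2 \<in> Th" "(rep \<theta>1, cl (rep \<theta>1) \<theta>1) = (rep \<theta>2, cl (rep \<theta>2) \<theta>2)"
      then have e1: "rep \<theta>1 = rep \<theta>2" and e2: "cl (rep \<theta>1) \<theta>1 = cl (rep \<theta>1) \<theta>2" by (simp_all, metis)
      have r1: "rep \<theta>1 \<in> Th" "\<theta>1 homeomorphic_space rep \<theta>1" using rep1[OF t(1)] by simp_all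
      have r2: "rep \<theta>2 \<in> Th" "\<theta>2 homeomorphic_space rep \<theta>2" using rep1[OF t(2)] by simp_all
      have L: "rep \<theta>1 \<in> LL0" "\<theta>1 \<in> LL0" "\<theta>2 \<in> LL0" using r1(1) t(1,2) ThL by (simp_all add: subsetD)
      have h1: "rep \<theta>1 homeomorphic_space \<theta>1" using homeomorphic_space_sym[THEN iffD1, OF r1(2)] .
      have h2: "rep \<theta>1 homeomorphic_space \<theta>2" using homeomorphic_space_sym[THEN iffD1, OF r2(2)] e1 by simp
      have m1: "\<theta>1 \<in> {\<theta> \<in> LL0. rep \<theta>1 homeomorphic_space \<theta>}" using L(2) h1 by simp
      have m2: "\<theta>2 \<in> {\<theta> \<in> LL0. rep \<theta>1 homeomorphic_space \<theta>}" using L(3) h2 by simp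
      show "\<theta>1 = \<theta>2" by (rule inj_onD[OF cl[OF L(1)] e2 m1 m2])
    qed
    moreover have "(\<lambda>\<theta>. (rep \<theta>, cl (rep \<theta>) \<theta>)) ` Th \<subseteq> F \<times> (UNIV :: nat set set)"
      unfolding F_def by (intro image_subsetI) simp
    ultimately have "Th \<lesssim> F \<times> (UNIV :: nat set set)" unfolding lepoll_def by (intro exI conjI)
    then have A: "(UNIV :: real set set) \<lesssim> F \<times> (UNIV :: nat set set)"
      by (rule lepoll_trans1[OF eqpoll_sym[OF ThU]])
    have "infinite (range (\<lambda>n::nat. {n}))" by (rule range_inj_infinite) (simp add: inj_on_def)
    then have B: "infinite (UNIV :: nat set set)" by (rule infinite_super[OF subset_UNIV])
    have "(UNIV :: real set) \<prec> Pow (UNIV :: real set)" by (rule lesspoll_Pow_self)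
    then have "(UNIV :: real set) \<prec> (UNIV :: real set set)" by simp
    then have C: "(UNIV :: nat set set) \<prec> (UNIV :: real set set)"
      by (rule eq_lesspoll_trans[OF nat_sets_eqpoll_reals])
    show ?thesis by (rule card_main[OF A B C])
  qed
  ultimately have P2: "F \<approx> (UNIV :: real set set)" by (rule lepoll_antisym)
  show ?thesis by (intro exI[of _ F] conjI P1 P2 P3 P4)
qed

end
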